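(* Let $\lambda_1,\lambda_2>0$. For $\nu\in(0,1)$ define, for $\theta\in\mathbb{R}$, $$\Psi^{(1)}_{\nu,\underline{\lambda}}(\theta):=\begin{cases}(\lambda_1(e^\theta-1))^{1/\nu} & \text{if } \theta\geq0,\\ (\lambda_2(e^{-\theta}-1))^{1/\nu} & \text{if } \theta<0,\end{cases}$$ $$\Psi^{(2)}_{\nu,\underline{\lambda}}(\theta):=\begin{cases}(\lambda_1(e^\theta-1)+\lambda_2(e^{-\theta}-1))^{1/\nu} & \text{if } \lambda_1(e^\theta-1)+\lambda_2(e^{-\theta}-1)\geq0,\\ 0 & \text{otherwise},\end{cases}$$ and for $k\in\{1,2\}$ let $I^{(k)}_{\mathrm{LD},\nu}(x):=\sup_{\theta\in\mathbb{R}}\{\theta x-\Psi^{(k)}_{\nu,\underline{\lambda}}(\theta)\}$. Let $\nu,\eta\in(0,1)$ with $\eta<\nu$. Then, for each $k\in\{1,2\}$, $I^{(k)}_{\mathrm{LD},\eta}(0)=I^{(k)}_{\mathrm{LD},\nu}(0)=0$ and there exists $\delta>0$ such that $I^{(k)}_{\mathrm{LD},\eta}(x)>I^{(k)}_{\mathrm{LD},\nu}(x)>0$ for all $x$ with $0<|x|<\delta$.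
   Context: In the paper, $I^{(1)}_{\mathrm{LD},\nu}$ and $I^{(2)}_{\mathrm{LD},\nu}$ are the large deviation rate functions (speed $t$) of $Y(t)/t$ and $Z(t)/t$ for the fractional Skellam processes of type 1 (with $\nu_1=\nu_2=\nu$) and type 2 respectively; the claim concerns only the explicitly defined functions above. *)

theory Defs
  imports "HOL-Analysis.Analysis"
begin

definition Psi1 :: "real \<Rightarrow> real \<Rightarrow> real \<Rightarrow> real \<Rightarrow> real" where
  "Psi1 l1 l2 \<nu> \<theta> =
     (if \<theta> \<ge> 0 then (l1 * (exp \<theta> - 1)) powr (1 / \<nu>)
      else (l2 * (exp (-\<theta>) - 1)) powr (1 / \<nu>))"

definition Psi2 :: "real \<Rightarrow> real \<Rightarrow> real \<Rightarrow> real \<Rightarrow> real" where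
  "Psi2 l1 l2 \<nu> \<theta> =
     (let a = l1 * (exp \<theta> - 1) + l2 * (exp (-\<theta>) - 1)
      in if a \<ge> 0 then a powr (1 / \<nu>) else 0)"

definition Psi :: "nat \<Rightarrow> real \<Rightarrow> real \<Rightarrow> real \<Rightarrow> real \<Rightarrow> real" where
  "Psi k l1 l2 \<nu> \<theta> = (if k = 1 then Psi1 l1 l2 \<nu> \<theta> else Psi2 l1 l2 \<nu> \<theta>)"

definition I_LD :: "nat \<Rightarrow> real \<Rightarrow> real \<Rightarrow> real \<Rightarrow> real \<Rightarrow> real" where
  "I_LD k l1 l2 \<nu> x = (SUP \<theta>::real. \<theta> * x - Psi k l1 l2 \<nu> \<theta>)"

end

theory Submission
  imports Defs
begin


lemma key_push:
  fixes B :: "real \<Rightarrow> real" and p t x L :: real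
  assumes p: "p > 1" and x: "x \<noteq> 0" and L: "L > 0"
    and Bnn: "\<And>s. B s \<ge> 0"
    and lip: "\<And>s. \<bar>s - t\<bar> \<le> 1 \<Longrightarrow> B s \<le> L * \<bar>s - t\<bar>"
  shows "\<exists>\<theta>. \<theta> * x - B \<theta> powr p > t * x"
proof -
  define c where "c = \<bar>x\<bar> / (2 * L powr p)"
  have c: "c > 0" using x L by (simp add: c_def)
  define h where "h = min 1 (c powr (1 / (p - 1)))"
  have h0: "h > 0" using c by (simp add: h_def)
  have h1: "h \<le> 1" by (simp add: h_def)
  have "h powr (p - 1) \<le> (c powr (1 / (p - 1))) powr (p - 1)"
    using p h0 by (intro powr_mono2) (auto simp: h_def)
  also have "\<dots> = c" using p c by (simp add: powr_powr)
  finally have hc: "h powr (p - 1) \<le> c" .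
  define \<theta> where "\<theta> = t + sgn x * h"
  have d: "\<bar>\<theta> - t\<bar> = h" using x h0 by (simp add: \<theta>_def abs_mult)
  have "B \<theta> powr p \<le> (L * h) powr p"
    using lip[of \<theta>] d h1 p Bnn[of \<theta>] by (intro powr_mono2) auto
  also have "\<dots> = L powr p * (h powr (p - 1) * h)"
    using L h0 by (simp add: powr_mult powr_diff)
  also have "\<dots> \<le> L powr p * (c * h)"
    using hc h0 by (intro mult_left_mono mult_right_mono) auto
  also have "\<dots> = \<bar>x\<bar> / 2 * h" using L by (simp add: c_def)
  also have "\<dots> < \<bar>x\<bar> * h" using x h0 by simp
  finally have "B \<theta> powr p < \<bar>x\<bar> * h" .
  moreover have "\<theta> * x = t * x + \<bar>x\<bar> * h"
  proof -
    have sx: "sgn x * x = \<bar>x\<bar>" by (simp add: sgn_if)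
    have "\<theta> * x = t * x + h * (sgn x * x)" by (simp add: \<theta>_def algebra_simps)
    then show ?thesis using sx by simp
  qed
  ultimately show ?thesis by (intro exI[of _ \<theta>]) linarith
qed



lemma outside_neg:
  fixes B :: "real \<Rightarrow> real"
  assumes r: "r \<ge> 1" and R: "R \<ge> 1" and x: "\<bar>x\<bar> < 1"
    and grow: "\<And>\<theta>. R \<le> \<bar>\<theta>\<bar> \<Longrightarrow> \<bar>\<theta>\<bar> \<le> B \<theta>"
    and th: "R \<le> \<bar>\<theta>\<bar>"
  shows "\<theta> * x - B \<theta> powr r < 0"
proof -
  have b: "\<bar>\<theta>\<bar> \<le> B \<theta>" "1 \<le> B \<theta>" using grow[OF th] th R by auto
  have "B \<theta> = B \<theta> powr 1" using b by simp
  also have "\<dots> \<le> B \<theta> powr r" using b r by (intro powr_mono) auto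
  finally have "B \<theta> \<le> B \<theta> powr r" .
  moreover have "\<theta> * x \<le> \<bar>\<theta>\<bar> * \<bar>x\<bar>" by (simp add: abs_mult[symmetric])
  moreover have "\<bar>\<theta>\<bar> * \<bar>x\<bar> < \<bar>\<theta>\<bar>"
  proof -
    have "0 < \<bar>\<theta>\<bar>" using th R by linarith
    then show ?thesis using x mult_strict_left_mono[of "\<bar>x\<bar>" 1 "\<bar>\<theta>\<bar>"] by linarith
  qed
  ultimately show ?thesis using b by linarith
qed

lemma bdd_f:
  fixes B :: "real \<Rightarrow> real"
  assumes r: "r \<ge> 1" and R: "R \<ge> 1" and x: "\<bar>x\<bar> < 1"
    and grow: "\<And>\<theta>. R \<le> \<bar>\<theta>\<bar> \<Longrightarrow> \<bar>\<theta>\<bar> \<le> B \<theta>"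
  shows "bdd_above (range (\<lambda>\<theta>. \<theta> * x - B \<theta> powr r))"
proof (rule bdd_aboveI2)
  fix \<theta>
  show "\<theta> * x - B \<theta> powr r \<le> R"
  proof (cases "R \<le> \<bar>\<theta>\<bar>")
    case True
    then show ?thesis using outside_neg[OF r R x grow True] R by linarith
  next
    case False
    have "\<theta> * x \<le> \<bar>\<theta>\<bar> * \<bar>x\<bar>" by (simp add: abs_mult[symmetric])
    also have "\<dots> \<le> R * 1" using False x by (intro mult_mono) auto
    finally have "\<theta> * x \<le> R" by simp
    moreover have "0 \<le> B \<theta> powr r" by simp
    ultimately show ?thesis by linarith
  qed
qed

lemma maximizer:
  fixes B :: "real \<Rightarrow> real"
  assumes r: "r \<ge> 1" and R: "R \<ge> 1" and x: "\<bar>x\<bar> < 1"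
    and cont: "continuous_on UNIV B" and Bnn: "\<And>s. B s \<ge> 0" and B0: "B 0 = 0"
    and grow: "\<And>\<theta>. R \<le> \<bar>\<theta>\<bar> \<Longrightarrow> \<bar>\<theta>\<bar> \<le> B \<theta>"
  shows "\<exists>t. \<bar>t\<bar> \<le> R \<and> (\<forall>\<theta>. \<theta> * x - B \<theta> powr r \<le> t * x - B t powr r)"
proof -
  let ?f = "\<lambda>\<theta>. \<theta> * x - B \<theta> powr r"
  have c: "continuous_on {-R..R} ?f"
    by (intro continuous_intros continuous_on_powr' continuous_on_subset[OF cont])
      (use Bnn r in auto)
  obtain t where t: "t \<in> {-R..R}" "\<And>y. y \<in> {-R..R} \<Longrightarrow> ?f y \<le> ?f t"
    using continuous_attains_sup[OF compact_Icc _ c] R by force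
  have f0: "?f 0 = 0" using B0 r by simp
  have "0 \<le> ?f t" using t(2)[of 0] R f0 by simp
  moreover have "?f \<theta> \<le> ?f t" for \<theta>
  proof (cases "\<theta> \<in> {-R..R}")
    case True then show ?thesis using t by blast
  next
    case False
    then have "R \<le> \<bar>\<theta>\<bar>" by auto
    from outside_neg[OF r R x grow this] show ?thesis using \<open>0 \<le> ?f t\<close> by linarith
  qed
  ultimately show ?thesis using t(1) by (intro exI[of _ t]) auto
qed

lemma abstract:
  fixes B :: "real \<Rightarrow> real" and p q R :: real
  assumes p: "1 < p" "p < q" and R: "R \<ge> 1"
    and cont: "continuous_on UNIV B" and Bnn: "\<And>s. B s \<ge> 0" and B0: "B 0 = 0"
    and lip: "\<And>t. B t = 0 \<Longrightarrow> \<exists>L>0. \<forall>s. \<bar>s - t\<bar> \<le> 1 \<longrightarrow> B s \<le> L * \<bar>s - t\<bar>"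
    and grow: "\<And>\<theta>. R \<le> \<bar>\<theta>\<bar> \<Longrightarrow> \<bar>\<theta>\<bar> \<le> B \<theta>"
  shows "(SUP \<theta>. \<theta> * 0 - B \<theta> powr r) = (0::real)"
    and "\<exists>\<delta>>0. \<forall>x. 0 < \<bar>x\<bar> \<and> \<bar>x\<bar> < \<delta> \<longrightarrow>
           (SUP \<theta>. \<theta> * x - B \<theta> powr q) > (SUP \<theta>. \<theta> * x - B \<theta> powr p) \<and>
           (SUP \<theta>. \<theta> * x - B \<theta> powr p) > 0"
proof -
  show "(SUP \<theta>. \<theta> * 0 - B \<theta> powr r) = (0::real)"
  proof (rule antisym)
    show "(SUP \<theta>. \<theta> * 0 - B \<theta> powr r) \<le> 0"
      by (rule cSUP_least) auto
    have "bdd_above (range (\<lambda>\<theta>. \<theta> * 0 - B \<theta> powr r))"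
      by (rule bdd_aboveI2[of _ _ 0]) auto
    from cSUP_upper[OF _ this, of 0] show "0 \<le> (SUP \<theta>. \<theta> * 0 - B \<theta> powr r)"
      using B0 by simp
  qed
  show "\<exists>\<delta>>0. \<forall>x. 0 < \<bar>x\<bar> \<and> \<bar>x\<bar> < \<delta> \<longrightarrow>
           (SUP \<theta>. \<theta> * x - B \<theta> powr q) > (SUP \<theta>. \<theta> * x - B \<theta> powr p) \<and>
           (SUP \<theta>. \<theta> * x - B \<theta> powr p) > 0"
  proof (intro exI[of _ "1 / R"] conjI allI impI)
    show "0 < 1 / R" using R by simp
    fix x :: real assume x: "0 < \<bar>x\<bar> \<and> \<bar>x\<bar> < 1 / R"
    have x1: "\<bar>x\<bar> < 1" using x R by (smt (verit) divide_le_eq_1)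
    have xR: "R * \<bar>x\<bar> < 1" using x R by (simp add: field_simps)
    have x0: "x \<noteq> 0" using x by simp
    have bp: "bdd_above (range (\<lambda>\<theta>. \<theta> * x - B \<theta> powr p))"
      by (rule bdd_f[OF _ R x1 grow]) (use p in auto)
    have bq: "bdd_above (range (\<lambda>\<theta>. \<theta> * x - B \<theta> powr q))"
      by (rule bdd_f[OF _ R x1 grow]) (use p in auto)
    obtain t where t: "\<bar>t\<bar> \<le> R" "\<And>\<theta>. \<theta> * x - B \<theta> powr p \<le> t * x - B t powr p"
      using maximizer[OF _ R x1 cont Bnn B0 grow, of p] p by auto
    have Sp: "(SUP \<theta>. \<theta> * x - B \<theta> powr p) = t * x - B t powr p"
    proof (rule antisym)
      show "(SUP \<theta>. \<theta> * x - B \<theta> powr p) \<le> t * x - B t powr p"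
        by (rule cSUP_least) (use t in auto)
      show "t * x - B t powr p \<le> (SUP \<theta>. \<theta> * x - B \<theta> powr p)"
        by (rule cSUP_upper[OF _ bp]) auto
    qed
    have Bt: "B t \<noteq> 0"
    proof
      assume "B t = 0"
      then obtain L where L: "L > 0" "\<And>s. \<bar>s - t\<bar> \<le> 1 \<Longrightarrow> B s \<le> L * \<bar>s - t\<bar>"
        using lip by blast
      obtain \<theta> where "\<theta> * x - B \<theta> powr p > t * x"
        using key_push[OF p(1) x0 L(1) Bnn L(2)] by blast
      with t(2)[of \<theta>] \<open>B t = 0\<close> show False by simp
    qed
    have "B t powr p \<le> t * x"
      using t(2)[of 0] B0 by simp
    also have "\<dots> \<le> \<bar>t\<bar> * \<bar>x\<bar>" by (simp add: abs_mult[symmetric])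
    also have "\<dots> \<le> R * \<bar>x\<bar>" using t(1) by (intro mult_right_mono) auto
    also have "\<dots> < 1" by (rule xR)
    finally have Btp: "B t powr p < 1" .
    have Bt1: "B t < 1"
    proof (rule ccontr)
      assume "\<not> B t < 1"
      then have "1 \<le> B t" by simp
      then have "1 \<le> B t powr p" using p by (simp add: ge_one_powr_ge_zero)
      with Btp show False by simp
    qed
    have "B t powr q < B t powr p"
      using powr_less_mono'[of "B t" p q] Bt Bnn[of t] Bt1 p by simp
    then have "t * x - B t powr p < t * x - B t powr q" by simp
    also have "\<dots> \<le> (SUP \<theta>. \<theta> * x - B \<theta> powr q)"
      by (rule cSUP_upper[OF _ bq]) auto
    finally show "(SUP \<theta>. \<theta> * x - B \<theta> powr q) > (SUP \<theta>. \<theta> * x - B \<theta> powr p)"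
      using Sp by simp
    obtain L where L: "L > 0" "\<And>s. \<bar>s - 0\<bar> \<le> 1 \<Longrightarrow> B s \<le> L * \<bar>s - 0\<bar>"
      using lip[OF B0] by blast
    obtain \<theta> where th: "\<theta> * x - B \<theta> powr p > 0 * x"
      using key_push[OF p(1) x0 L(1) Bnn L(2)] by blast
    have "\<theta> * x - B \<theta> powr p \<le> (SUP \<theta>. \<theta> * x - B \<theta> powr p)"
      by (rule cSUP_upper[OF _ bp]) auto
    with th show "(SUP \<theta>. \<theta> * x - B \<theta> powr p) > 0" by simp
  qed
qed



lemma exp_lip: "\<bar>exp s - exp t\<bar> \<le> exp (max s t) * \<bar>s - t\<bar>" for s t :: real
proof -
  have *: "exp a - exp b \<le> exp a * (a - b)" if "b \<le> a" for a b :: real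
  proof -
    have "1 + (b - a) \<le> exp (b - a)" by (rule exp_ge_add_one_self)
    then have "exp a * (1 + (b - a)) \<le> exp a * exp (b - a)" by simp
    also have "\<dots> = exp b" by (simp add: exp_diff)
    finally show ?thesis by (simp add: algebra_simps)
  qed
  show ?thesis
  proof (cases "t \<le> s")
    case True
    then show ?thesis using *[OF True] by (simp add: max_def)
  next
    case False
    then show ?thesis using *[of s t] by (simp add: max_def abs_minus_commute)
  qed
qed

lemma exp_lip2: "\<bar>s - t\<bar> \<le> 1 \<Longrightarrow> \<bar>exp s - exp t\<bar> \<le> exp (\<bar>t\<bar> + 1) * \<bar>s - t\<bar>" for s t :: real
  using exp_lip[of s t]
  by (smt (verit, best) abs_ge_zero exp_le_cancel_iff mult_right_mono)

definition aa :: "real \<Rightarrow> real \<Rightarrow> real \<Rightarrow> real" where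
  "aa l1 l2 \<theta> = l1 * (exp \<theta> - 1) + l2 * (exp (-\<theta>) - 1)"
definition BB :: "nat \<Rightarrow> real \<Rightarrow> real \<Rightarrow> real \<Rightarrow> real" where
  "BB k l1 l2 \<theta> = (if k = 1 then max (l1 * (exp \<theta> - 1)) (l2 * (exp (-\<theta>) - 1))
                    else max (aa l1 l2 \<theta>) 0)"

lemma exp_quad: "0 \<le> \<theta> \<Longrightarrow> \<theta> + \<theta>\<^sup>2 / 4 \<le> exp \<theta> - 1" for \<theta> :: real
proof -
  assume h: "0 \<le> \<theta>"
  have "1 + \<theta>/2 \<le> exp (\<theta>/2)" by (rule exp_ge_add_one_self)
  then have "(1 + \<theta>/2)\<^sup>2 \<le> (exp (\<theta>/2))\<^sup>2" using h by (intro power_mono) auto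
  also have "\<dots> = exp \<theta>" by (simp add: power2_eq_square exp_add[symmetric])
  finally show ?thesis by (simp add: power2_eq_square field_simps)
qed

lemma aa_grow:
  assumes l: "l1 > 0" "l2 > 0"
    and th: "max 1 (max (4 * (l2 + 1) / l1) (4 * (l1 + 1) / l2)) \<le> \<bar>\<theta>\<bar>"
  shows "\<bar>\<theta>\<bar> \<le> aa l1 l2 \<theta>"
proof (cases "0 \<le> \<theta>")
  case True
  have "4 * (l2 + 1) / l1 \<le> \<theta>" using th True by simp
  then have h: "4 * (l2 + 1) \<le> l1 * \<theta>" using l by (simp add: field_simps)
  have "l1 * (\<theta> + \<theta>\<^sup>2 / 4) \<le> l1 * (exp \<theta> - 1)" using exp_quad[OF True] l by simp
  moreover have "- \<theta> \<le> exp (-\<theta>) - 1" using exp_ge_add_one_self[of "-\<theta>"] by simp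
  then have "l2 * (- \<theta>) \<le> l2 * (exp (-\<theta>) - 1)" using l by (intro mult_left_mono) auto
  moreover have "\<theta> \<le> l1 * (\<theta> + \<theta>\<^sup>2 / 4) + l2 * (- \<theta>)"
  proof -
    have "4 * (l2 + 1) * \<theta> \<le> l1 * \<theta> * \<theta>" using h True by (intro mult_right_mono) auto
    then have A: "\<theta> * 4 + \<theta> * (l2 * 4) \<le> \<theta> * (\<theta> * l1)" by (simp add: algebra_simps)
    have B: "0 \<le> \<theta> * l1" using True l by simp
    have C: "l1 * (\<theta> + \<theta>\<^sup>2 / 4) + l2 * (- \<theta>) = \<theta> * l1 + \<theta> * (\<theta> * l1) / 4 - \<theta> * l2"
      by (simp add: power2_eq_square algebra_simps)
    show ?thesis unfolding C using A B by linarith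
  qed
  ultimately show ?thesis using True by (simp add: aa_def)
next
  case False
  let ?u = "-\<theta>"
  have U: "0 \<le> ?u" using False by simp
  have "4 * (l1 + 1) / l2 \<le> ?u" using th False by simp
  then have h: "4 * (l1 + 1) \<le> l2 * ?u" using l by (simp add: field_simps)
  have "l2 * (?u + ?u\<^sup>2 / 4) \<le> l2 * (exp ?u - 1)" using exp_quad[OF U] l by simp
  moreover have "- ?u \<le> exp \<theta> - 1" using exp_ge_add_one_self[of "\<theta>"] by linarith
  then have "l1 * (- ?u) \<le> l1 * (exp \<theta> - 1)" using l by (intro mult_left_mono) auto
  moreover have "?u \<le> l2 * (?u + ?u\<^sup>2 / 4) + l1 * (- ?u)"
  proof -
    have "4 * (l1 + 1) * ?u \<le> l2 * ?u * ?u" using h U by (intro mult_right_mono) auto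
    then have A: "?u * 4 + ?u * (l1 * 4) \<le> ?u * (?u * l2)" by (simp add: algebra_simps)
    have B: "0 \<le> ?u * l2" using U l by (intro mult_nonneg_nonneg) auto
    have C: "l2 * (?u + ?u\<^sup>2 / 4) + l1 * (- ?u) = ?u * l2 + ?u * (?u * l2) / 4 - ?u * l1"
      by (simp add: power2_eq_square algebra_simps)
    show ?thesis unfolding C using A B by linarith
  qed
  ultimately show ?thesis using False by (simp add: aa_def)
qed

lemma BB_ge_aa: "l1 > 0 \<Longrightarrow> l2 > 0 \<Longrightarrow> aa l1 l2 \<theta> \<le> BB k l1 l2 \<theta>"
proof -
  assume l: "l1 > 0" "l2 > 0"
  have "exp \<theta> - 1 \<le> 0 \<or> exp (-\<theta>) - 1 \<le> 0" by (cases "0 \<le> \<theta>") auto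
  then have "l1 * (exp \<theta> - 1) \<le> 0 \<or> l2 * (exp (-\<theta>) - 1) \<le> 0"
    using l by (auto simp: mult_nonneg_nonpos)
  then show ?thesis by (auto simp: BB_def aa_def)
qed

lemma BB_nn: "l1 > 0 \<Longrightarrow> l2 > 0 \<Longrightarrow> 0 \<le> BB k l1 l2 \<theta>"
proof -
  assume l: "l1 > 0" "l2 > 0"
  have "0 \<le> exp \<theta> - 1 \<or> 0 \<le> exp (-\<theta>) - 1" by (cases "0 \<le> \<theta>") auto
  then have "0 \<le> l1 * (exp \<theta> - 1) \<or> 0 \<le> l2 * (exp (-\<theta>) - 1)"
    using l by auto
  then show ?thesis by (auto simp: BB_def)
qed

lemma BB_lip:
  assumes l: "l1 > 0" "l2 > 0" and st: "\<bar>s - t\<bar> \<le> 1"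
  shows "\<bar>BB k l1 l2 s - BB k l1 l2 t\<bar> \<le> (l1 + l2) * exp (\<bar>t\<bar> + 1) * \<bar>s - t\<bar>"
proof -
  let ?E = "exp (\<bar>t\<bar> + 1) * \<bar>s - t\<bar>"
  have e1: "\<bar>l1 * (exp s - 1) - l1 * (exp t - 1)\<bar> \<le> l1 * ?E"
    using exp_lip2[OF st] l by (simp add: abs_mult right_diff_distrib[symmetric])
  have st': "\<bar>-s - -t\<bar> \<le> 1" using st by simp
  have e2: "\<bar>l2 * (exp (-s) - 1) - l2 * (exp (-t) - 1)\<bar> \<le> l2 * ?E"
    using exp_lip2[OF st'] l by (simp add: abs_mult right_diff_distrib[symmetric] abs_minus_commute)
  have E: "0 \<le> ?E" by simp
  have mx: "\<bar>max a b - max c d\<bar> \<le> \<bar>a - c\<bar> + \<bar>b - d\<bar>" for a b c d :: real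
    by (simp add: max_def abs_if) 
  have aa: "\<bar>aa l1 l2 s - aa l1 l2 t\<bar> \<le> l1 * ?E + l2 * ?E"
  proof -
    have "aa l1 l2 s - aa l1 l2 t = (l1 * (exp s - 1) - l1 * (exp t - 1)) + (l2 * (exp (-s) - 1) - l2 * (exp (-t) - 1))"
      by (simp add: aa_def algebra_simps)
    then have "\<bar>aa l1 l2 s - aa l1 l2 t\<bar> \<le> \<bar>l1 * (exp s - 1) - l1 * (exp t - 1)\<bar> + \<bar>l2 * (exp (-s) - 1) - l2 * (exp (-t) - 1)\<bar>"
      by (simp only: abs_triangle_ineq)
    then show ?thesis using e1 e2 by linarith
  qed
  have "\<bar>BB k l1 l2 s - BB k l1 l2 t\<bar> \<le> l1 * ?E + l2 * ?E"
  proof (cases "k = 1")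
    case True
    then show ?thesis using mx[of "l1 * (exp s - 1)" "l2 * (exp (-s) - 1)" "l1 * (exp t - 1)" "l2 * (exp (-t) - 1)"] e1 e2
      by (simp add: BB_def)
  next
    case False
    then show ?thesis using mx[of "aa l1 l2 s" 0 "aa l1 l2 t" 0] aa by (simp add: BB_def)
  qed
  then show ?thesis by (simp add: algebra_simps)
qed

lemma Psi_BB:
  assumes l: "l1 > 0" "l2 > 0" and k: "k \<in> {1, 2}"
  shows "Psi k l1 l2 \<nu> \<theta> = BB k l1 l2 \<theta> powr (1 / \<nu>)"
proof (cases "k = 1")
  case True
  have "0 \<le> \<theta> \<Longrightarrow> l2 * (exp (-\<theta>) - 1) \<le> 0" using l by (simp add: mult_nonneg_nonpos)
  moreover have "\<not> 0 \<le> \<theta> \<Longrightarrow> l1 * (exp \<theta> - 1) \<le> 0" using l by (simp add: mult_nonneg_nonpos)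
  moreover have "0 \<le> \<theta> \<Longrightarrow> 0 \<le> l1 * (exp \<theta> - 1)" using l by simp
  moreover have "\<not> 0 \<le> \<theta> \<Longrightarrow> 0 \<le> l2 * (exp (-\<theta>) - 1)" using l by simp
  ultimately show ?thesis using True
    by (cases "0 \<le> \<theta>") (simp_all add: Psi_def Psi1_def BB_def max_absorb1 max_absorb2)
next
  case False
  then show ?thesis by (auto simp: Psi_def Psi2_def BB_def aa_def Let_def max_def)
qed



theorem proposition5p5:
  fixes l1 l2 \<nu> \<eta> :: real and k :: nat
  assumes "l1 > 0" and "l2 > 0"
    and "0 < \<eta>" and "\<eta> < \<nu>" and "\<nu> < 1"
    and "k \<in> {1, 2}"
  shows "I_LD k l1 l2 \<eta> 0 = 0 \<and> I_LD k l1 l2 \<nu> 0 = 0 \<and>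
         (\<exists>\<delta>>0. \<forall>x::real. 0 < \<bar>x\<bar> \<and> \<bar>x\<bar> < \<delta> \<longrightarrow>
            I_LD k l1 l2 \<eta> x > I_LD k l1 l2 \<nu> x \<and> I_LD k l1 l2 \<nu> x > 0)"
proof -
  note l = assms(1,2)
  have I: "I_LD k l1 l2 \<mu> x = (SUP \<theta>. \<theta> * x - BB k l1 l2 \<theta> powr (1 / \<mu>))" for \<mu> x
    unfolding I_LD_def using Psi_BB[OF l assms(6)] by simp
  have p: "1 < 1 / \<nu>" "1 / \<nu> < 1 / \<eta>" using assms by (auto simp: field_simps)
  define R where "R = max 1 (max (4 * (l2 + 1) / l1) (4 * (l1 + 1) / l2))"
  have R: "R \<ge> 1" by (simp add: R_def)
  have cont: "continuous_on UNIV (BB k l1 l2)"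
    unfolding BB_def aa_def by (cases "k = 1") (simp_all add: continuous_intros)
  have Bnn: "\<And>s. BB k l1 l2 s \<ge> 0" using BB_nn[OF l] .
  have B0: "BB k l1 l2 0 = 0" by (simp add: BB_def aa_def)
  have lip: "\<exists>L>0. \<forall>s. \<bar>s - t\<bar> \<le> 1 \<longrightarrow> BB k l1 l2 s \<le> L * \<bar>s - t\<bar>"
    if "BB k l1 l2 t = 0" for t
  proof (intro exI[of _ "(l1 + l2) * exp (\<bar>t\<bar> + 1)"] conjI allI impI)
    show "0 < (l1 + l2) * exp (\<bar>t\<bar> + 1)" using l by simp
    fix s assume "\<bar>s - t\<bar> \<le> 1"
    from BB_lip[OF l this, of k] that
    show "BB k l1 l2 s \<le> (l1 + l2) * exp (\<bar>t\<bar> + 1) * \<bar>s - t\<bar>" by simp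
  qed
  have grow: "\<bar>\<theta>\<bar> \<le> BB k l1 l2 \<theta>" if "R \<le> \<bar>\<theta>\<bar>" for \<theta>
    using aa_grow[OF l, of \<theta>] that BB_ge_aa[OF l, of \<theta> k] unfolding R_def by linarith
  note A = abstract[OF p R cont Bnn B0 lip grow]
  show ?thesis unfolding I using A by blast
qed


end
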